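(* Let $\Sigma^*$ be an $n\times n$ positive definite matrix whose conditional independence structure is a tree $T^*$, with smallest eigenvalue $\lambda^*$, let $D^*$ be a diagonal matrix with nonnegative entries satisfying $D^*_{ii}<\lambda^*$ for all $i$, and let $\Sigma^o=\Sigma^*+D^*$. Then for every decomposition $\Sigma^o=\Sigma'+D'$ in which $\Sigma'$ is positive definite with smallest eigenvalue at least $\lambda^*$ and conditional independence structure a tree $T'$, and $D'$ is diagonal with nonnegative entries, we have $T'=T^*$.
   Context: For an $n\times n$ positive definite matrix $\Sigma$ with inverse $\Omega$, its conditional independence structure is the graph on $\{1,\dots,n\}$ with an edge $\{i,j\}$ ($i\neq j$) iff $\Omega_{ij}\neq 0$. *)

theory Defs
  imports "HOL-Analysis.Analysis"
begin

text \<open>Matrices are n x n real matrices indexed by a finite type 'n (vertex set = UNIV).\<close>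

definition pos_def_matrix :: "real^'n^'n \<Rightarrow> bool" where
  "pos_def_matrix A \<longleftrightarrow> transpose A = A \<and> (\<forall>x. x \<noteq> 0 \<longrightarrow> x \<bullet> (A *v x) > 0)"

definition is_eigenvalue :: "real^'n^'n \<Rightarrow> real \<Rightarrow> bool" where
  "is_eigenvalue A l \<longleftrightarrow> (\<exists>v. v \<noteq> 0 \<and> A *v v = l *\<^sub>R v)"

definition smallest_eigenvalue :: "real^'n^'n \<Rightarrow> real \<Rightarrow> bool" where
  "smallest_eigenvalue A l \<longleftrightarrow> is_eigenvalue A l \<and> (\<forall>m. is_eigenvalue A m \<longrightarrow> l \<le> m)"

definition diagonal_nonneg :: "real^'n^'n \<Rightarrow> bool" where
  "diagonal_nonneg D \<longleftrightarrow> (\<forall>i j. i \<noteq> j \<longrightarrow> D $ i $ j = 0) \<and> (\<forall>i. D $ i $ i \<ge> 0)"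

definition ci_graph :: "real^'n^'n \<Rightarrow> 'n \<Rightarrow> 'n \<Rightarrow> bool" where
  "ci_graph S i j \<longleftrightarrow> i \<noteq> j \<and> matrix_inv S $ i $ j \<noteq> 0"

definition walk :: "('a \<Rightarrow> 'a \<Rightarrow> bool) \<Rightarrow> 'a list \<Rightarrow> bool" where
  "walk E vs \<longleftrightarrow> vs \<noteq> [] \<and> (\<forall>k. Suc k < length vs \<longrightarrow> E (vs ! k) (vs ! Suc k))"

definition graph_connected :: "('a \<Rightarrow> 'a \<Rightarrow> bool) \<Rightarrow> bool" where
  "graph_connected E \<longleftrightarrow> (\<forall>u v. \<exists>vs. walk E vs \<and> hd vs = u \<and> last vs = v)"

definition has_cycle :: "('a \<Rightarrow> 'a \<Rightarrow> bool) \<Rightarrow> bool" where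
  "has_cycle E \<longleftrightarrow> (\<exists>vs. length vs \<ge> 3 \<and> distinct vs \<and> walk E vs \<and> E (last vs) (hd vs))"

definition is_tree :: "('a \<Rightarrow> 'a \<Rightarrow> bool) \<Rightarrow> bool" where
  "is_tree E \<longleftrightarrow> graph_connected E \<and> \<not> has_cycle E"

end

theory Submission
  imports Defs
begin

lemma walk_Nil[simp]: "\<not> walk R []" by (simp add: walk_def)
lemma walk_single[simp]: "walk R [x]" by (simp add: walk_def)
lemma walk_Cons2[simp]: "walk R (x # y # vs) \<longleftrightarrow> R x y \<and> walk R (y # vs)"
proof
  assume h: "walk R (x # y # vs)"
  have h2: "\<And>k. Suc k < length (x # y # vs) \<Longrightarrow> R ((x # y # vs) ! k) ((x # y # vs) ! Suc k)"
    using h unfolding walk_def by blast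
  have "R x y" using h2[of 0] by simp
  moreover have "walk R (y # vs)" unfolding walk_def
  proof (intro conjI allI impI)
    fix k assume "Suc k < length (y # vs)"
    then have "Suc (Suc k) < length (x # y # vs)" by simp
    from h2[OF this] show "R ((y # vs) ! k) ((y # vs) ! Suc k)" by simp
  qed simp
  ultimately show "R x y \<and> walk R (y # vs)" by simp
next
  assume h: "R x y \<and> walk R (y # vs)"
  show "walk R (x # y # vs)" unfolding walk_def
  proof (intro conjI allI impI)
    fix k assume k: "Suc k < length (x # y # vs)"
    show "R ((x # y # vs) ! k) ((x # y # vs) ! Suc k)"
    proof (cases k)
      case 0 then show ?thesis using h by simp
    next
      case (Suc m)
      then have "Suc m < length (y # vs)" using k by simp
      then have "R ((y # vs) ! m) ((y # vs) ! Suc m)" using h unfolding walk_def by blast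
      then show ?thesis using Suc by simp
    qed
  qed simp
qed
lemma walk_mono_set:
  assumes "walk R vs" "\<And>u v. u \<in> set vs \<Longrightarrow> v \<in> set vs \<Longrightarrow> R u v \<Longrightarrow> R' u v"
  shows "walk R' vs"
  unfolding walk_def
proof (intro conjI allI impI)
  show "vs \<noteq> []" using assms(1) walk_def by blast
  fix k assume k: "Suc k < length vs"
  then have "R (vs ! k) (vs ! Suc k)" using assms(1) walk_def by blast
  moreover have "vs ! k \<in> set vs" "vs ! Suc k \<in> set vs" using k by auto
  ultimately show "R' (vs ! k) (vs ! Suc k)" using assms(2) by blast
qed

lemma walk_mono:
  assumes "walk R vs" "\<And>u v. R u v \<Longrightarrow> R' u v"
  shows "walk R' vs"
  using assms walk_mono_set by metis

lemma walk_append: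
  assumes "walk R xs" "walk R ys" "last xs = hd ys"
  shows "walk R (xs @ tl ys)"
  using assms
proof (induction xs rule: induct_list012)
  case 1 then show ?case by simp
next
  case (2 x) then show ?case by (cases ys) auto
next
  case (3 x y zs)
  then show ?case by simp
qed

lemma walk_append_D2:
  assumes "walk R (us @ zs)" "zs \<noteq> []"
  shows "walk R zs"
  using assms
proof (induction us)
  case Nil then show ?case by simp
next
  case (Cons u us)
  then obtain y ws where "us @ zs = y # ws" by (cases "us @ zs") auto
  then show ?case using Cons by auto
qed

lemma walk_rev:
  assumes "walk R vs" "\<And>u v. R u v \<Longrightarrow> R v u"
  shows "walk R (rev vs)"
  using assms(1)
proof (induction vs rule: induct_list012)
  case 1 then show ?case by simp
next
  case (2 x) then show ?case by simp
next
  case (3 x y zs)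
  have w: "walk R (rev (y # zs))" using 3 by simp
  have "walk R [y, x]" using 3 assms(2) by simp
  from walk_append[OF w this] show ?case by simp
qed

definition reach :: "('a \<Rightarrow> 'a \<Rightarrow> bool) \<Rightarrow> 'a \<Rightarrow> 'a \<Rightarrow> bool" where
  "reach R u v \<longleftrightarrow> (\<exists>vs. walk R vs \<and> hd vs = u \<and> last vs = v)"

lemma reach_refl: "reach R u u"
  unfolding reach_def by (rule exI[of _ "[u]"]) simp

lemma walk_ne: "walk R vs \<Longrightarrow> vs \<noteq> []" by (simp add: walk_def)

lemma reach_trans: "reach R u v \<Longrightarrow> reach R v w \<Longrightarrow> reach R u w"
  unfolding reach_def
proof (elim exE conjE)
  fix xs ys assume a: "walk R xs" "hd xs = u" "last xs = v" "walk R ys" "hd ys = v" "last ys = w"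
  have xne: "xs \<noteq> []" and yne: "ys \<noteq> []" using a walk_ne by auto
  have "walk R (xs @ tl ys)" using walk_append[OF a(1) a(4)] a(3,5) by simp
  moreover have "hd (xs @ tl ys) = u" using a(2) xne by simp
  moreover have "last (xs @ tl ys) = w"
  proof (cases "tl ys = []")
    case True
    then have "ys = [hd ys]" using yne by (cases ys) auto
    then show ?thesis using True a(3,5,6) by (metis append_Nil2 last.simps)
  next
    case False
    then have "last (tl ys) = last ys" using yne by (cases ys) auto
    then show ?thesis using False a(6) by simp
  qed
  ultimately show "\<exists>vs. walk R vs \<and> hd vs = u \<and> last vs = w" by blast
qed

lemma reach_sym: "(\<And>u v. R u v \<Longrightarrow> R v u) \<Longrightarrow> reach R u v \<Longrightarrow> reach R v u"
  unfolding reach_def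
proof (elim exE conjE)
  fix vs assume s: "\<And>u v. R u v \<Longrightarrow> R v u" and a: "walk R vs" "hd vs = u" "last vs = v"
  have "walk R (rev vs)" using walk_rev[of R vs] a(1) s by blast
  moreover have "hd (rev vs) = v" using a(3) walk_ne[OF a(1)] by (simp add: hd_rev)
  moreover have "last (rev vs) = u" using a(2) walk_ne[OF a(1)] by (simp add: last_rev)
  ultimately show "\<exists>vs. walk R vs \<and> hd vs = v \<and> last vs = u" by blast
qed

lemma reach_step: "reach R u v \<Longrightarrow> R v w \<Longrightarrow> reach R u w"
proof -
  assume a: "reach R u v" "R v w"
  have "reach R v w" unfolding reach_def
    by (rule exI[of _ "[v, w]"]) (simp add: a(2))
  with a(1) show "reach R u w" by (rule reach_trans)
qed

lemma reach_mono: "reach R u v \<Longrightarrow> (\<And>u v. R u v \<Longrightarrow> R' u v) \<Longrightarrow> reach R' u v"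
  unfolding reach_def using walk_mono by blast

lemma walk_path:
  assumes "walk R vs"
  shows "\<exists>ps. walk R ps \<and> distinct ps \<and> hd ps = hd vs \<and> last ps = last vs"
  using assms
proof (induction vs)
  case Nil then show ?case by simp
next
  case (Cons x vs)
  show ?case
  proof (cases vs)
    case Nil then show ?thesis by (intro exI[of _ "[x]"]) simp
  next
    case (Cons y ws)
    with Cons.prems have xy: "R x y" and wv: "walk R vs" by auto
    from Cons.IH[OF wv] obtain ps where ps: "walk R ps" "distinct ps" "hd ps = hd vs" "last ps = last vs" by blast
    have psne: "ps \<noteq> []" using ps(1) walk_def by blast
    show ?thesis
    proof (cases "x \<in> set ps")
      case False
      obtain p ps' where pp: "ps = p # ps'" using psne by (cases ps) auto
      have "p = y" using pp ps(3) Cons by simp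
      then have "walk R (x # ps)" using pp xy ps(1) by simp
      moreover have "last (x # ps) = last (x # vs)" using ps(4) psne Cons by simp
      ultimately show ?thesis using False ps(2) by (intro exI[of _ "x # ps"]) simp
    next
      case True
      then obtain us zs where uz: "ps = us @ x # zs" by (meson split_list)
      have "walk R (x # zs)" using walk_append_D2[of R us "x # zs"] uz ps(1) by simp
      moreover have "distinct (x # zs)" using ps(2) uz by simp
      moreover have "last (x # zs) = last (x # vs)" using ps(4) uz Cons by simp
      ultimately show ?thesis by (intro exI[of _ "x # zs"]) simp
    qed
  qed
qed

lemma reach_path:
  assumes "reach R u v"
  shows "\<exists>ps. walk R ps \<and> distinct ps \<and> hd ps = u \<and> last ps = v"
  using assms walk_path unfolding reach_def by metis

definition avoidE :: "'a \<Rightarrow> 'a \<Rightarrow> ('a \<Rightarrow> 'a \<Rightarrow> bool) \<Rightarrow> 'a \<Rightarrow> 'a \<Rightarrow> bool" where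
  "avoidE a b E u v \<longleftrightarrow> E u v \<and> \<not> (u = a \<and> v = b) \<and> \<not> (u = b \<and> v = a)"

definition avoidV :: "'a \<Rightarrow> ('a \<Rightarrow> 'a \<Rightarrow> bool) \<Rightarrow> 'a \<Rightarrow> 'a \<Rightarrow> bool" where
  "avoidV j E u v \<longleftrightarrow> E u v \<and> u \<noteq> j \<and> v \<noteq> j"

lemma short_list: "\<not> 3 \<le> length ps \<Longrightarrow> ps = [] \<or> (\<exists>x. ps = [x]) \<or> (\<exists>x y. ps = [x, y])"
proof (cases ps)
  case (Cons x t)
  assume l: "\<not> 3 \<le> length ps"
  show ?thesis
  proof (cases t)
    case (Cons y t2)
    then have "t2 = []" using l \<open>ps = x # t\<close> by (cases t2) auto
    then show ?thesis using Cons \<open>ps = x # t\<close> by simp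
  qed (simp add: Cons)
qed simp

lemma short2: "ps = [] \<or> (\<exists>x. ps = [x]) \<or> (\<exists>x y zs. ps = x # y # zs)"
proof (cases ps)
  case (Cons x t)
  then show ?thesis by (cases t) auto
qed simp

lemma avoidE_sym:
  assumes "\<And>u v. E u v \<Longrightarrow> E v u"
  shows "\<And>u v. avoidE a b E u v \<Longrightarrow> avoidE a b E v u"
  unfolding avoidE_def using assms by blast

lemma tree_T1:
  assumes tree: "is_tree E" and sym: "\<And>u v. E u v \<Longrightarrow> E v u" and irr: "\<And>u. \<not> E u u"
    and ab: "E a b"
  shows "\<not> reach (avoidE a b E) a b"
proof
  assume "reach (avoidE a b E) a b"
  then obtain ps where ps: "walk (avoidE a b E) ps" "distinct ps" "hd ps = a" "last ps = b"
    using reach_path by metis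
  have "a \<noteq> b" using ab irr by metis
  have "length ps \<ge> 3"
  proof (rule ccontr)
    assume "\<not> 3 \<le> length ps"
    then consider "ps = []" | x where "ps = [x]" | x y where "ps = [x, y]"
      using short_list by blast
    then show False
    proof cases
      case 1 then show ?thesis using ps(1) by simp
    next
      case 2 then show ?thesis using ps \<open>a \<noteq> b\<close> by simp
    next
      case 3 then show ?thesis using ps by (simp add: avoidE_def)
    qed
  qed
  moreover have "walk E ps" by (rule walk_mono[OF ps(1)]) (simp add: avoidE_def)
  moreover have "E (last ps) (hd ps)" using ps(3,4) sym[OF ab] by simp
  ultimately have "has_cycle E" unfolding has_cycle_def using ps(2) by blast
  then show False using tree is_tree_def by blast
qed

lemma walk_avoidV_notin:
  assumes "walk (avoidV j E) vs" "hd vs \<noteq> j"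
  shows "j \<notin> set vs"
  using assms
proof (induction vs rule: induct_list012)
  case 1 then show ?case by simp
next
  case (2 x) then show ?case by simp
next
  case (3 x y zs)
  then show ?case by (auto simp: avoidV_def)
qed

lemma reach_avoidV_ne: "reach (avoidV j E) u v \<Longrightarrow> u \<noteq> j \<Longrightarrow> v \<noteq> j"
  unfolding reach_def
proof (elim exE conjE)
  fix vs assume a: "walk (avoidV j E) vs" "hd vs = u" "last vs = v" "u \<noteq> j"
  have "j \<notin> set vs" using walk_avoidV_notin[OF a(1)] a(2,4) by simp
  moreover have "last vs \<in> set vs" using walk_ne[OF a(1)] by simp
  ultimately show "v \<noteq> j" using a(3) by auto
qed

lemma tree_G1:
  assumes tree: "is_tree E" and sym: "\<And>u v. E u v \<Longrightarrow> E v u" and irr: "\<And>u. \<not> E u u"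
    and ab: "a \<noteq> b" "\<not> E a b"
  shows "\<exists>j. j \<noteq> a \<and> j \<noteq> b \<and> \<not> reach (avoidV j E) a b"
proof -
  have "reach E a b" using tree unfolding is_tree_def graph_connected_def reach_def by blast
  then obtain ps where ps: "walk E ps" "distinct ps" "hd ps = a" "last ps = b"
    using reach_path by metis
  obtain j rest where pj: "ps = a # j # rest"
  proof -
    consider "ps = []" | x where "ps = [x]" | x y zs where "ps = x # y # zs"
      using short2 by blast
    then show ?thesis
    proof cases
      case 1 then show ?thesis using ps by simp
    next
      case 2 then show ?thesis using ps ab by simp
    next
      case 3
      then have "ps = a # y # zs" using ps(3) by simp
      then show ?thesis by (rule that)
    qed
  qed
  have Eaj: "E a j" using ps pj by simp
  have ja: "j \<noteq> a" using ps(2) pj by auto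
  have jb: "j \<noteq> b"
  proof
    assume "j = b"
    show False
    proof (cases rest)
      case Nil then show ?thesis using pj Eaj ab \<open>j = b\<close> by simp
    next
      case (Cons r rs)
      then have "last ps \<in> set rest" using pj by simp
      moreover have "j \<notin> set rest" using ps(2) pj by simp
      ultimately show ?thesis using ps(4) \<open>j = b\<close> by simp
    qed
  qed
  have "\<not> reach (avoidV j E) a b"
  proof
    assume r: "reach (avoidV j E) a b"
    have r1: "reach (avoidE a j E) a b"
      by (rule reach_mono[OF r]) (auto simp: avoidV_def avoidE_def)
    have w: "walk E (j # rest)" using ps(1) pj by simp
    have "walk (avoidE a j E) (j # rest)"
    proof (rule walk_mono_set[OF w])
      fix u v assume "u \<in> set (j # rest)" "v \<in> set (j # rest)" "E u v"
      moreover have "a \<notin> set (j # rest)" using ps(2) pj by simp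
      ultimately show "avoidE a j E u v" unfolding avoidE_def by auto
    qed
    then have "reach (avoidE a j E) j b"
      unfolding reach_def using ps(4) pj by (intro exI[of _ "j # rest"]) simp
    moreover have sA: "\<And>u v. avoidE a j E u v \<Longrightarrow> avoidE a j E v u"
      unfolding avoidE_def using sym by blast
    ultimately have "reach (avoidE a j E) b j"
      using reach_sym[of "avoidE a j E" j b] by blast
    then have "reach (avoidE a j E) a j" by (rule reach_trans[OF r1])
    then show False using tree_T1[OF tree sym irr Eaj] by simp
  qed
  then show ?thesis using ja jb by blast
qed

lemma tree_G2:
  assumes tree: "is_tree E" and sym: "\<And>u v. E u v \<Longrightarrow> E v u" and irr: "\<And>u. \<not> E u u"
    and ab: "E a b" and j: "j \<noteq> a" "j \<noteq> b"
  shows "\<not> reach (avoidV b E) j a \<or> \<not> reach (avoidV a E) j b"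
proof (rule ccontr)
  assume "\<not> ?thesis"
  then have r1: "reach (avoidV b E) j a" and r2: "reach (avoidV a E) j b" by auto
  have s1: "reach (avoidE a b E) j a" by (rule reach_mono[OF r1]) (auto simp: avoidV_def avoidE_def)
  have s2: "reach (avoidE a b E) j b" by (rule reach_mono[OF r2]) (auto simp: avoidV_def avoidE_def)
  have sA: "\<And>u v. avoidE a b E u v \<Longrightarrow> avoidE a b E v u"
      unfolding avoidE_def using sym by blast
  have "reach (avoidE a b E) a j" using reach_sym[of "avoidE a b E" j a] sA s1 by blast
  then have "reach (avoidE a b E) a b" by (rule reach_trans[OF _ s2])
  then show False using tree_T1[OF tree sym irr ab] by simp
qed

lemma tr_comp: "Finite_Cartesian_Product.transpose A $ i $ j = A $ j $ i"
  by (simp add: transpose_def)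

lemma pd_sym: "pos_def_matrix S \<Longrightarrow> S $ i $ j = S $ j $ i"
  unfolding pos_def_matrix_def by (metis tr_comp)

lemma pd_invertible: "pos_def_matrix S \<Longrightarrow> invertible S"
proof -
  assume pd: "pos_def_matrix S"
  have "\<forall>x. S *v x = 0 \<longrightarrow> x = 0"
    using pd unfolding pos_def_matrix_def by (metis inner_zero_right less_irrefl)
  then show ?thesis using invertible_left_inverse matrix_left_invertible_ker by blast
qed

lemma inv_props:
  assumes "invertible (S::real^'n^'n)"
  shows "S ** matrix_inv S = mat 1" "matrix_inv S ** S = mat 1"
proof -
  have "\<exists>A'. S ** A' = mat 1 \<and> A' ** S = mat 1" using assms invertible_def by blast
  then have "S ** matrix_inv S = mat 1 \<and> matrix_inv S ** S = mat 1"
    unfolding matrix_inv_def by (rule someI_ex)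
  then show "S ** matrix_inv S = mat 1" "matrix_inv S ** S = mat 1" by auto
qed

lemma inv_sym:
  assumes pd: "pos_def_matrix (S::real^'n^'n)"
  shows "matrix_inv S $ i $ j = matrix_inv S $ j $ i"
proof -
  let ?O = "matrix_inv S"
  have inv: "S ** ?O = mat 1" "?O ** S = mat 1" using inv_props pd_invertible pd by auto
  have tS: "Finite_Cartesian_Product.transpose S = S" using pd pos_def_matrix_def by blast
  have "Finite_Cartesian_Product.transpose ?O ** S = mat 1"
    by (metis inv(1) matrix_transpose_mul tS transpose_mat)
  then have "Finite_Cartesian_Product.transpose ?O = ?O"
    by (metis inv(1) matrix_mul_assoc matrix_mul_lid matrix_mul_rid)
  then show ?thesis by (metis tr_comp)
qed

lemma inv_pd:
  assumes pd: "pos_def_matrix (S::real^'n^'n)" and w: "w \<bullet> (matrix_inv S *v w) = 0"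
  shows "w = 0"
proof (rule ccontr)
  assume wn: "w \<noteq> 0"
  let ?O = "matrix_inv S"
  have inv: "S ** ?O = mat 1" "?O ** S = mat 1" using inv_props pd_invertible pd by auto
  define y where "y = ?O *v w"
  have wy: "w = S *v y" unfolding y_def by (simp add: matrix_vector_mul_assoc inv)
  have yn: "y \<noteq> 0" using wy wn by auto
  have tS: "Finite_Cartesian_Product.transpose S = S" using pd pos_def_matrix_def by blast
  have "w \<bullet> y = y \<bullet> (S *v y)"
    by (metis dot_lmul_matrix inner_commute tS transpose_matrix_vector wy)
  then have "w \<bullet> y > 0" using pd yn unfolding pos_def_matrix_def by auto
  then show False using w y_def by simp
qed

lemma pd_diag_pos: "pos_def_matrix (S::real^'n^'n) \<Longrightarrow> S $ b $ b > 0"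
proof -
  assume pd: "pos_def_matrix S"
  have "axis b 1 \<noteq> (0::real^'n)" by (simp add: axis_eq_0_iff)
  then have "axis b 1 \<bullet> (S *v axis b 1) > 0" using pd pos_def_matrix_def by blast
  then show ?thesis by (simp add: inner_axis' matrix_vector_mult_basis column_def)
qed

lemma mult_entry: "(A ** B) $ i $ j = (\<Sum>k\<in>UNIV. A $ i $ k * B $ k $ j)"
  by (simp add: matrix_matrix_mult_def)

lemma mv_entry: "(A *v x) $ i = (\<Sum>k\<in>UNIV. A $ i $ k * x $ k)"
  by (simp add: matrix_vector_mult_def)

lemma inner_sum: "(x::real^'n) \<bullet> y = (\<Sum>k\<in>UNIV. x $ k * y $ k)"
  by (simp add: inner_vec_def)

lemma sep_lemma:
  fixes S :: "real^'n^'n"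
  assumes pd: "pos_def_matrix S" and jA: "j \<notin> A" and bA: "b \<notin> A" and bj: "b \<noteq> j"
    and zero: "\<And>a' k. a' \<in> A \<Longrightarrow> k \<notin> A \<Longrightarrow> k \<noteq> j \<Longrightarrow> matrix_inv S $ a' $ k = 0"
    and aA: "a \<in> A"
  shows "S $ a $ b * S $ j $ j = S $ a $ j * S $ j $ b"
proof -
  let ?O = "matrix_inv S"
  have inv: "?O ** S = mat 1" using inv_props pd_invertible pd by auto
  define z where "z k = S $ k $ b * S $ j $ j - S $ k $ j * S $ j $ b" for k
  define w :: "real^'n" where "w = (\<chi> k. if k \<in> A then z k else 0)"
  have Ow: "(?O *v w) $ k = 0" if kA: "k \<in> A" for k
  proof -
    have "(?O *v w) $ k = (\<Sum>l\<in>UNIV. ?O $ k $ l * z l)"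
      unfolding mv_entry
    proof (rule sum.cong[OF refl])
      fix l
      show "?O $ k $ l * w $ l = ?O $ k $ l * z l"
      proof (cases "l \<in> A")
        case True then show ?thesis by (simp add: w_def)
      next
        case False
        show ?thesis
        proof (cases "l = j")
          case True then show ?thesis by (simp add: w_def z_def False)
        next
          case lj: False
          then show ?thesis using zero[OF kA False lj] by (simp add: w_def False)
        qed
      qed
    qed
    also have "\<dots> = (\<Sum>l\<in>UNIV. ?O $ k $ l * S $ l $ b * S $ j $ j
                   - ?O $ k $ l * S $ l $ j * S $ j $ b)"
      by (rule sum.cong) (auto simp: z_def algebra_simps)
    also have "\<dots> = (\<Sum>l\<in>UNIV. ?O $ k $ l * S $ l $ b * S $ j $ j)
                   - (\<Sum>l\<in>UNIV. ?O $ k $ l * S $ l $ j * S $ j $ b)"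
      by (rule sum_subtractf)
    also have "\<dots> = (\<Sum>l\<in>UNIV. ?O $ k $ l * S $ l $ b) * S $ j $ j
                   - (\<Sum>l\<in>UNIV. ?O $ k $ l * S $ l $ j) * S $ j $ b"
      by (simp add: sum_distrib_right)
    also have "\<dots> = (?O ** S) $ k $ b * S $ j $ j - (?O ** S) $ k $ j * S $ j $ b"
      by (simp add: mult_entry)
    also have "\<dots> = 0" using inv kA jA bA by (auto simp: mat_def)
    finally show ?thesis .
  qed
  have "w \<bullet> (?O *v w) = 0"
    unfolding inner_sum
  proof (rule sum.neutral, intro ballI)
    fix k
    show "w $ k * (?O *v w) $ k = 0"
    proof (cases "k \<in> A")
      case True then show ?thesis using Ow[OF True] by simp
    next
      case False then show ?thesis by (simp add: w_def)
    qed
  qed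
  then have "w = 0" using inv_pd pd by blast
  then have "w $ a = 0" by simp
  then show ?thesis using aA by (simp add: w_def z_def)
qed

lemma edge_lemma:
  fixes S :: "real^'n^'n"
  assumes pd: "pos_def_matrix S" and aA: "a \<in> A" and bA: "b \<notin> A"
    and only: "\<And>a' k. a' \<in> A \<Longrightarrow> k \<notin> A \<Longrightarrow> matrix_inv S $ a' $ k \<noteq> 0 \<Longrightarrow> a' = a \<and> k = b"
    and Oab: "matrix_inv S $ a $ b \<noteq> 0"
  shows "S $ a $ b \<noteq> 0"
proof
  assume Sab: "S $ a $ b = 0"
  let ?O = "matrix_inv S"
  have inv: "?O ** S = mat 1" using inv_props pd_invertible pd by auto
  define w :: "real^'n" where "w = (\<chi> k. if k \<in> A then S $ k $ b else 0)"
  have Ow: "(?O *v w) $ k = - (if k = a then ?O $ a $ b * S $ b $ b else 0)" if kA: "k \<in> A" for k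
  proof -
    have "(?O *v w) $ k = (\<Sum>l\<in>UNIV. ?O $ k $ l * S $ l $ b
             - (if k = a \<and> l = b then ?O $ a $ b * S $ b $ b else 0))"
      unfolding mv_entry
    proof (rule sum.cong[OF refl])
      fix l
      show "?O $ k $ l * w $ l = ?O $ k $ l * S $ l $ b
             - (if k = a \<and> l = b then ?O $ a $ b * S $ b $ b else 0)"
      proof (cases "l \<in> A")
        case True then show ?thesis using bA by (auto simp: w_def)
      next
        case False
        show ?thesis
        proof (cases "?O $ k $ l = 0")
          case True
          then show ?thesis using False only[OF kA False] by (auto simp: w_def)
        next
          case nz: False
          then have "k = a \<and> l = b" using only[OF kA False] by blast
          then show ?thesis using False by (simp add: w_def)
        qed
      qed
    qed
    also have "\<dots> = (\<Sum>l\<in>UNIV. ?O $ k $ l * S $ l $ b)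
             - (\<Sum>l\<in>UNIV. (if k = a \<and> l = b then ?O $ a $ b * S $ b $ b else 0))"
      by (simp add: sum_subtractf)
    also have "(\<Sum>l\<in>UNIV. (if k = a \<and> l = b then ?O $ a $ b * S $ b $ b else 0))
         = (if k = a then ?O $ a $ b * S $ b $ b else 0)"
      by (cases "k = a") auto
    also have "(\<Sum>l\<in>UNIV. ?O $ k $ l * S $ l $ b) = (?O ** S) $ k $ b"
      by (simp add: mult_entry)
    also have "\<dots> = 0" using inv kA bA by (auto simp: mat_def)
    finally show ?thesis by simp
  qed
  have "w \<bullet> (?O *v w) = (\<Sum>k\<in>UNIV. (if k = a then - S $ a $ b * (?O $ a $ b * S $ b $ b) else 0))"
    unfolding inner_sum
  proof (rule sum.cong[OF refl])
    fix k
    show "w $ k * (?O *v w) $ k = (if k = a then - S $ a $ b * (?O $ a $ b * S $ b $ b) else 0)"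
    proof (cases "k \<in> A")
      case True then show ?thesis using Ow[OF True] by (simp add: w_def)
    next
      case False then show ?thesis using aA by (auto simp: w_def)
    qed
  qed
  also have "\<dots> = 0" using Sab by simp
  finally have "w = 0" using inv_pd pd by blast
  then have "(?O *v w) $ a = 0" by simp
  moreover have "S $ b $ b > 0" using pd_diag_pos pd by blast
  ultimately show False using Ow[OF aA] Oab by simp
qed

lemma quad_zero:
  fixes a b :: real
  assumes h: "\<And>t. 0 \<le> 2 * t * a + t\<^sup>2 * b" and a0: "a \<ge> 0"
  shows "a = 0"
proof (rule ccontr)
  assume "a \<noteq> 0"
  then have ap: "a > 0" using a0 by simp
  define s where "s = a / (\<bar>b\<bar> + 1)"
  have sp: "s > 0" using ap by (simp add: s_def add_pos_nonneg)
  have "0 \<le> 2 * (- s) * a + (- s)\<^sup>2 * b" by (rule h)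
  then have "0 \<le> s * (s * b - 2 * a)" by (simp add: power2_eq_square algebra_simps)
  then have "0 \<le> s * b - 2 * a" using sp by (simp add: zero_le_mult_iff)
  moreover have "s * b \<le> s * \<bar>b\<bar>" using sp by (simp add: mult_left_mono)
  moreover have "s * \<bar>b\<bar> \<le> a"
  proof -
    have "s * \<bar>b\<bar> = a * (\<bar>b\<bar> / (\<bar>b\<bar> + 1))" by (simp add: s_def)
    also have "\<dots> \<le> a * 1" using ap by (intro mult_left_mono) auto
    finally show ?thesis by simp
  qed
  ultimately show False using ap by linarith
qed

lemma sym_form:
  fixes M :: "real^'n^'n"
  assumes tM: "Finite_Cartesian_Product.transpose M = M"
  shows "x \<bullet> (M *v y) = y \<bullet> (M *v x)"
  by (metis dot_lmul_matrix inner_commute tM transpose_matrix_vector)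

lemma rayleigh:
  fixes M :: "real^'n^'n"
  assumes tM: "Finite_Cartesian_Product.transpose M = M"
    and ev: "\<forall>m. is_eigenvalue M m \<longrightarrow> l \<le> m"
  shows "l * (x \<bullet> x) \<le> x \<bullet> (M *v x)"
proof -
  define f where "f x = x \<bullet> (M *v x)" for x :: "real^'n"
  have cont: "continuous_on (sphere 0 1) f"
    unfolding f_def by (intro continuous_on_inner continuous_on_id matrix_vector_mult_linear_continuous_on)
  have ne: "sphere (0::real^'n) 1 \<noteq> {}"
  proof -
    have "axis undefined 1 \<in> sphere (0::real^'n) 1" by (simp add: norm_axis_1)
    then show ?thesis by blast
  qed
  obtain v where v: "v \<in> sphere 0 1" and vmin: "\<And>y. y \<in> sphere 0 1 \<Longrightarrow> f v \<le> f y"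
    using continuous_attains_inf[OF compact_sphere ne cont] by blast
  define \<mu> where "\<mu> = f v"
  have nv: "norm v = 1" using v by simp
  have vv: "v \<bullet> v = 1" using nv by (simp add: dot_square_norm)
  have key: "\<mu> * (x \<bullet> x) \<le> f x" for x
  proof (cases "x = 0")
    case True then show ?thesis by (simp add: f_def)
  next
    case False
    define y where "y = (1 / norm x) *\<^sub>R x"
    have ny: "y \<in> sphere 0 1" using False by (simp add: y_def)
    have fy: "f y = f x / (norm x)\<^sup>2"
      by (simp add: y_def f_def matrix_vector_mult_scaleR power2_eq_square divide_simps)
    have "\<mu> \<le> f x / (norm x)\<^sup>2" using vmin[OF ny] fy \<mu>_def by simp
    then have "\<mu> * (norm x)\<^sup>2 \<le> f x" using False by (simp add: divide_simps)
    then show ?thesis by (simp add: dot_square_norm)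
  qed
  define g where "g x = f x - \<mu> * (x \<bullet> x)" for x
  have g0: "g x \<ge> 0" for x using key[of x] by (simp add: g_def)
  define u where "u = M *v v - \<mu> *\<^sub>R v"
  have su: "v \<bullet> (M *v u) = u \<bullet> (M *v v)" by (rule sym_form[OF tM])
  have uu: "u \<bullet> u = u \<bullet> (M *v v) - \<mu> * (u \<bullet> v)"
    by (simp add: u_def inner_diff_right)
  have exp: "g (v + t *\<^sub>R u) = 2 * t * (u \<bullet> u) + t\<^sup>2 * g u" for t
  proof -
    have e1: "f (v + t *\<^sub>R u) = \<mu> + 2 * t * (u \<bullet> (M *v v)) + t\<^sup>2 * f u"
      using su by (simp add: \<mu>_def f_def matrix_vector_right_distrib matrix_vector_mult_scaleR
          inner_add_left inner_add_right power2_eq_square algebra_simps)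
    have e2: "(v + t *\<^sub>R u) \<bullet> (v + t *\<^sub>R u) = 1 + 2 * t * (u \<bullet> v) + t\<^sup>2 * (u \<bullet> u)"
      using vv by (simp add: inner_add_left inner_add_right inner_commute[of v u] power2_eq_square algebra_simps)
    have "g (v + t *\<^sub>R u) = (\<mu> + 2 * t * (u \<bullet> (M *v v)) + t\<^sup>2 * f u)
        - \<mu> * (1 + 2 * t * (u \<bullet> v) + t\<^sup>2 * (u \<bullet> u))"
      by (simp only: g_def e1 e2)
    also have "\<dots> = 2 * t * (u \<bullet> (M *v v) - \<mu> * (u \<bullet> v)) + t\<^sup>2 * (f u - \<mu> * (u \<bullet> u))"
      by (simp add: algebra_simps)
    also have "\<dots> = 2 * t * (u \<bullet> u) + t\<^sup>2 * g u"
      using uu by (simp add: g_def)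
    finally show ?thesis .
  qed
  have "u \<bullet> u = 0"
    by (rule quad_zero[of "u \<bullet> u" "g u"]) (use g0 exp in \<open>metis\<close>, simp)
  then have "u = 0" by simp
  then have "M *v v = \<mu> *\<^sub>R v" by (simp add: u_def)
  moreover have "v \<noteq> 0" using nv by auto
  ultimately have "is_eigenvalue M \<mu>" unfolding is_eigenvalue_def by blast
  then have "l \<le> \<mu>" using ev by blast
  then have "l * (x \<bullet> x) \<le> \<mu> * (x \<bullet> x)" by (simp add: mult_right_mono)
  then show ?thesis using key[of x] by (simp add: f_def)
qed

lemma psd2:
  fixes M :: "real^'n^'n"
  assumes tM: "Finite_Cartesian_Product.transpose M = M"
    and psd: "\<And>x. l * (x \<bullet> x) \<le> x \<bullet> (M *v x)" and bj: "b \<noteq> j"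
  shows "M $ b $ b - l \<ge> 0" "M $ j $ j - l \<ge> 0"
    "(M $ b $ j)\<^sup>2 \<le> (M $ b $ b - l) * (M $ j $ j - l)"
proof -
  have Mjb: "M $ j $ b = M $ b $ j" by (metis tM tr_comp)
  have q: "0 \<le> \<alpha>\<^sup>2 * (M $ b $ b - l) + 2 * \<alpha> * \<beta> * (M $ b $ j) + \<beta>\<^sup>2 * (M $ j $ j - l)" for \<alpha> \<beta>
  proof -
    define x :: "real^'n" where "x = \<alpha> *\<^sub>R axis b 1 + \<beta> *\<^sub>R axis j 1"
    have "x \<bullet> x = \<alpha>\<^sup>2 + \<beta>\<^sup>2"
      using bj by (simp add: x_def inner_add_left inner_add_right inner_axis_axis power2_eq_square)
    moreover have "x \<bullet> (M *v x) = \<alpha>\<^sup>2 * M $ b $ b + 2 * \<alpha> * \<beta> * (M $ b $ j) + \<beta>\<^sup>2 * M $ j $ j"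
      using Mjb by (simp add: x_def inner_add_left inner_add_right matrix_vector_right_distrib
          matrix_vector_mult_scaleR matrix_vector_mult_basis inner_axis' column_def
          power2_eq_square algebra_simps)
    ultimately show ?thesis using psd[of x] by (simp add: algebra_simps)
  qed
  show X: "M $ b $ b - l \<ge> 0" using q[of 1 0] by simp
  show Y: "M $ j $ j - l \<ge> 0" using q[of 0 1] by simp
  show "(M $ b $ j)\<^sup>2 \<le> (M $ b $ b - l) * (M $ j $ j - l)"
  proof (cases "M $ b $ b - l = 0")
    case False
    then have Xp: "M $ b $ b - l > 0" using X by simp
    have "0 \<le> (M $ b $ b - l) * ((M $ b $ b - l) * (M $ j $ j - l) - (M $ b $ j)\<^sup>2)"
      using q[of "- M $ b $ j" "M $ b $ b - l"] by (simp add: power2_eq_square algebra_simps)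
    then show ?thesis using Xp by (simp add: zero_le_mult_iff)
  next
    case True
    have "M $ b $ j = 0"
    proof (rule ccontr)
      assume c: "M $ b $ j \<noteq> 0"
      have "0 \<le> 2 * (- (M $ j $ j - l + 1) / (2 * M $ b $ j)) * 1 * (M $ b $ j) + 1\<^sup>2 * (M $ j $ j - l)"
        using q[of "- (M $ j $ j - l + 1) / (2 * M $ b $ j)" 1] True by simp
      then show False using c by (simp add: field_simps)
    qed
    then show ?thesis using True by simp
  qed
qed

lemma final_contra:
  fixes sab p saj sjb sja sba sbb xb l :: real
  assumes s: "sab \<noteq> 0" and e1: "sab * p = saj * sjb" and e2: "sja * sbb = sjb * sba"
    and sy: "saj = sja" "sba = sab"
    and B: "sbb > 0" and xb: "xb < sbb + l" and l: "l > 0" and p: "p > 0"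
    and psd: "sjb\<^sup>2 \<le> (xb - l) * (p - l)" and X: "xb - l \<ge> 0" and Y: "p - l \<ge> 0"
  shows False
proof -
  have "sab * p * sbb = sjb * (sja * sbb)" using e1 sy by (simp add: algebra_simps)
  also have "\<dots> = sab * sjb\<^sup>2" using e2 sy by (simp add: power2_eq_square algebra_simps)
  finally have "p * sbb = sjb\<^sup>2" using s by (simp add: algebra_simps)
  moreover have "(xb - l) * (p - l) \<le> sbb * (p - l)" using xb Y by (intro mult_right_mono) auto
  moreover have "sbb * (p - l) < sbb * p" using B l by simp
  ultimately show False using psd by (simp add: algebra_simps)
qed

lemma ci_sym: "pos_def_matrix S \<Longrightarrow> ci_graph S u v \<Longrightarrow> ci_graph S v u"
  unfolding ci_graph_def using inv_sym by metis

lemma ci_irr: "\<not> ci_graph S u u"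
  unfolding ci_graph_def by simp

theorem mainTheorem6:
  fixes Sstar Dstar So :: "real^'n^'n" and lstar :: real
  assumes "pos_def_matrix Sstar"
    and "is_tree (ci_graph Sstar)"
    and "smallest_eigenvalue Sstar lstar"
    and "diagonal_nonneg Dstar"
    and "\<forall>i. Dstar $ i $ i < lstar"
    and "So = Sstar + Dstar"
  shows "\<forall>S' D'. So = S' + D' \<and> pos_def_matrix S'
           \<and> (\<forall>m. is_eigenvalue S' m \<longrightarrow> lstar \<le> m)
           \<and> is_tree (ci_graph S') \<and> diagonal_nonneg D'
           \<longrightarrow> ci_graph S' = ci_graph Sstar"
proof (intro allI impI)
  fix S' D' :: "real^'n^'n"
  assume h: "So = S' + D' \<and> pos_def_matrix S'
           \<and> (\<forall>m. is_eigenvalue S' m \<longrightarrow> lstar \<le> m)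
           \<and> is_tree (ci_graph S') \<and> diagonal_nonneg D'"
  let ?S = Sstar
  have pdS: "pos_def_matrix ?S" using assms(1) .
  have treeS: "is_tree (ci_graph ?S)" using assms(2) .
  have pdS': "pos_def_matrix S'" and ev': "\<forall>m. is_eigenvalue S' m \<longrightarrow> lstar \<le> m"
    and treeS': "is_tree (ci_graph S')" and dD': "diagonal_nonneg D'" and dec: "So = S' + D'"
    using h by auto
  have S'eq: "S' $ i $ k = ?S $ i $ k + Dstar $ i $ k - D' $ i $ k" for i k
  proof -
    have "S' = So - D'" using dec by simp
    then show ?thesis using assms(6) by simp
  qed
  have off: "S' $ i $ k = ?S $ i $ k" if "i \<noteq> k" for i k
    using S'eq[of i k] assms(4) dD' that unfolding diagonal_nonneg_def by simp
  have diagb: "S' $ i $ i < ?S $ i $ i + lstar" for i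
    using S'eq[of i i] assms(5) dD' unfolding diagonal_nonneg_def by (smt (verit))
  have lpos: "lstar > 0"
  proof -
    obtain v where v: "v \<noteq> 0" "?S *v v = lstar *\<^sub>R v"
      using assms(3) unfolding smallest_eigenvalue_def is_eigenvalue_def by blast
    have "v \<bullet> (?S *v v) > 0" using pdS v(1) unfolding pos_def_matrix_def by blast
    then have "lstar * (v \<bullet> v) > 0" using v(2) by simp
    moreover have "v \<bullet> v > 0" using v(1) by simp
    ultimately show ?thesis by (simp add: zero_less_mult_iff)
  qed
  have tS': "Finite_Cartesian_Product.transpose S' = S'" using pdS' pos_def_matrix_def by blast
  have psd: "\<And>x. lstar * (x \<bullet> x) \<le> x \<bullet> (S' *v x)" using rayleigh[OF tS' ev'] by blast
  define E where "E = ci_graph ?S"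
  define E' where "E' = ci_graph S'"
  have symE: "\<And>u v. E u v \<Longrightarrow> E v u" unfolding E_def using ci_sym[OF pdS] by blast
  have symE': "\<And>u v. E' u v \<Longrightarrow> E' v u" unfolding E'_def using ci_sym[OF pdS'] by blast
  have irrE: "\<And>u. \<not> E u u" unfolding E_def using ci_irr by blast
  have irrE': "\<And>u. \<not> E' u u" unfolding E'_def using ci_irr by blast
  have tE: "is_tree E" using treeS E_def by simp
  have tE': "is_tree E'" using treeS' E'_def by simp
  have symS: "\<And>i k. ?S $ i $ k = ?S $ k $ i" using pd_sym[OF pdS] by blast
  have sepG: "M $ a $ b * M $ j $ j = M $ a $ j * M $ j $ b"
    if pdM: "pos_def_matrix M" and nr: "\<not> reach (avoidV j (ci_graph M)) a b"
      and aj: "a \<noteq> j" and bj: "b \<noteq> j" for M :: "real^'n^'n" and a b j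
  proof -
    define A where "A = {v. reach (avoidV j (ci_graph M)) a v}"
    show ?thesis
    proof (rule sep_lemma[OF pdM, of j A b])
      show "j \<notin> A"
      proof
        assume "j \<in> A"
        then have "reach (avoidV j (ci_graph M)) a j" unfolding A_def by simp
        from reach_avoidV_ne[OF this aj] show False by simp
      qed
      show "b \<notin> A" unfolding A_def using nr by simp
      show "b \<noteq> j" by (rule bj)
      show "a \<in> A" unfolding A_def by (simp add: reach_refl)
      fix a' k assume a'A: "a' \<in> A" and kA: "k \<notin> A" and kj: "k \<noteq> j"
      show "matrix_inv M $ a' $ k = 0"
      proof (rule ccontr)
        assume nz: "matrix_inv M $ a' $ k \<noteq> 0"
        have ka': "k \<noteq> a'" using a'A kA by auto
        have r: "reach (avoidV j (ci_graph M)) a a'" using a'A A_def by simp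
        have "a' \<noteq> j" using reach_avoidV_ne[OF r aj] .
        then have "avoidV j (ci_graph M) a' k"
          unfolding avoidV_def ci_graph_def using nz ka' kj by auto
        then have "reach (avoidV j (ci_graph M)) a k" by (rule reach_step[OF r])
        then show False using kA A_def by simp
      qed
    qed
  qed
  have dir1: "E' a b" if Eab: "E a b" for a b
  proof (rule ccontr)
    assume nE': "\<not> E' a b"
    have ab: "a \<noteq> b" using Eab irrE by auto
    obtain j where ja: "j \<noteq> a" and jb: "j \<noteq> b" and nr: "\<not> reach (avoidV j E') a b"
      using tree_G1[OF tE' symE' irrE' ab nE'] by blast
    have eq1': "S' $ a $ b * S' $ j $ j = S' $ a $ j * S' $ j $ b"
      using sepG[OF pdS' nr[unfolded E'_def] not_sym[OF ja] not_sym[OF jb]] .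
    have eq1: "?S $ a $ b * S' $ j $ j = ?S $ a $ j * ?S $ j $ b"
      using eq1' off[OF ab] off[OF not_sym[OF ja]] off[OF jb] by simp
    have Sab: "?S $ a $ b \<noteq> 0"
    proof -
      define A where "A = {v. reach (avoidE a b E) a v}"
      show ?thesis
      proof (rule edge_lemma[OF pdS, of a A b])
        show "a \<in> A" unfolding A_def by (simp add: reach_refl)
        show bA: "b \<notin> A" unfolding A_def using tree_T1[OF tE symE irrE Eab] by simp
        show "matrix_inv ?S $ a $ b \<noteq> 0" using Eab unfolding E_def ci_graph_def by simp
        fix a' k assume a'A: "a' \<in> A" and kA: "k \<notin> A" and nz: "matrix_inv ?S $ a' $ k \<noteq> 0"
        show "a' = a \<and> k = b"
        proof (rule ccontr)
          assume nab: "\<not> (a' = a \<and> k = b)"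
          have ka': "k \<noteq> a'" using a'A kA by auto
          have a'b: "a' \<noteq> b" using a'A bA by auto
          have r: "reach (avoidE a b E) a a'" using a'A A_def by simp
          have "avoidE a b E a' k"
            unfolding avoidE_def E_def ci_graph_def using nz ka' nab a'b by auto
          then have "reach (avoidE a b E) a k" by (rule reach_step[OF r])
          then show False using kA A_def by simp
        qed
      qed
    qed
    have psdb: "S' $ b $ b - lstar \<ge> 0" "S' $ j $ j - lstar \<ge> 0"
      "(S' $ b $ j)\<^sup>2 \<le> (S' $ b $ b - lstar) * (S' $ j $ j - lstar)"
      using psd2[OF tS' psd not_sym[OF jb]] by blast+
    have psda: "S' $ a $ a - lstar \<ge> 0"
      "(S' $ a $ j)\<^sup>2 \<le> (S' $ a $ a - lstar) * (S' $ j $ j - lstar)"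
      using psd2[OF tS' psd not_sym[OF ja]] by blast+
    have pj: "S' $ j $ j > 0" using pd_diag_pos[OF pdS'] by blast
    consider "\<not> reach (avoidV b E) j a" | "\<not> reach (avoidV a E) j b"
      using tree_G2[OF tE symE irrE Eab ja jb] by blast
    then show False
    proof cases
      case 1
      have e2: "?S $ j $ a * ?S $ b $ b = ?S $ j $ b * ?S $ b $ a"
        using sepG[OF pdS 1[unfolded E_def] jb ab] .
      have P: "(?S $ j $ b)\<^sup>2 \<le> (S' $ b $ b - lstar) * (S' $ j $ j - lstar)"
        using psdb(3) off[OF not_sym[OF jb]] symS[of b j] by simp
      show False
        by (rule final_contra[OF Sab eq1 e2 symS[of a j] symS[of b a] pd_diag_pos[OF pdS] diagb lpos pj P psdb(1) psdb(2)])
    next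
      case 2
      have e2: "?S $ j $ b * ?S $ a $ a = ?S $ j $ a * ?S $ a $ b"
        using sepG[OF pdS 2[unfolded E_def] ja not_sym[OF ab]] .
      have Sba: "?S $ b $ a \<noteq> 0" using Sab symS[of b a] by simp
      have eq1b: "?S $ b $ a * S' $ j $ j = ?S $ b $ j * ?S $ j $ a"
        using eq1 by (simp add: symS[of b a] symS[of b j] symS[of j a] mult.commute)
      have P: "(?S $ j $ a)\<^sup>2 \<le> (S' $ a $ a - lstar) * (S' $ j $ j - lstar)"
        using psda(2) off[OF not_sym[OF ja]] symS[of a j] by simp
      show False
        by (rule final_contra[OF Sba eq1b e2 symS[of b j] symS[of a b] pd_diag_pos[OF pdS] diagb lpos pj P psda(1) psdb(2)])
    qed
  qed
  have dir2: "E a b" if E'ab: "E' a b" for a b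
  proof (rule ccontr)
    assume nE: "\<not> E a b"
    have nE2: "\<not> E b a" using nE symE by blast
    have "reach E a b" using tE unfolding is_tree_def graph_connected_def reach_def by blast
    then have "reach (avoidE a b E') a b"
    proof (rule reach_mono)
      fix u v assume "E u v"
      then show "avoidE a b E' u v" unfolding avoidE_def using dir1 nE nE2 by blast
    qed
    then show False using tree_T1[OF tE' symE' irrE' E'ab] by simp
  qed
  show "ci_graph S' = ci_graph ?S"
    using dir1 dir2 unfolding E_def E'_def by (intro ext) blast
qed

end
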